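(* Let $g=\frac{\sqrt5-1}2$, $g\le\alpha\le\beta\le1$, $x\in[\alpha-1,\alpha)$, $z\in[\beta-1,\beta)$. (1) If $x=z$ or $(x+1)(1-z)=1$ or $(1-x)(z+1)=1$, then $T_\beta(z)-T_\alpha(x)\in\{0,1\}$. (2) If $x+z=0$ or $(x+1)(z+1)=1$, then $T_\alpha(x)+T_\beta(z)\in\{0,1\}$. (3) If $z-x=1$, then $(x+1)(T_\beta(z)+1)=1$. (4) If $x+z=1$, then $(T_\alpha(x)+1)(1-z)=1$ if $x>\frac1{\alpha+1}$; $(1-x)(T_\beta(z)+1)=1$ if $z>\frac1{\beta+1}$; and $(T_\alpha(x)+1)(T_\beta(z)+1)=1$ otherwise.
   Context: For $\alpha\in[\tfrac12,1]$, $T_\alpha:[\alpha-1,\alpha)\to[\alpha-1,\alpha)$ is $T_\alpha(x)=\frac1x-\lfloor\frac1x+1-\alpha\rfloor$ for $x\ne0$, $T_\alpha(0)=0$. *)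

theory Defs
  imports Complex_Main
begin

definition Talpha :: "real \<Rightarrow> real \<Rightarrow> real" where
  "Talpha a x = (if x = 0 then 0 else 1 / x - of_int \<lfloor>1 / x + 1 - a\<rfloor>)"

end

theory Submission
  imports Defs
begin

lemma T_props:
  assumes "x \<noteq> 0"
  shows "a - 1 \<le> Talpha a x \<and> Talpha a x < a \<and> (\<exists>n::int. Talpha a x = 1/x - of_int n)"
proof -
  have e: "Talpha a x = 1/x - of_int \<lfloor>1 / x + 1 - a\<rfloor>" using assms by (simp add: Talpha_def)
  have "of_int \<lfloor>1 / x + 1 - a\<rfloor> \<le> 1/x + 1 - a" by (rule of_int_floor_le)
  moreover have "1/x + 1 - a < of_int \<lfloor>1 / x + 1 - a\<rfloor> + 1" by (rule real_of_int_floor_add_one_gt)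
  ultimately have "a - 1 \<le> 1/x - of_int \<lfloor>1 / x + 1 - a\<rfloor>" "1/x - of_int \<lfloor>1 / x + 1 - a\<rfloor> < a" by linarith+
  thus ?thesis unfolding e by blast
qed

lemma T_eq:
  assumes "x \<noteq> 0" "a - 1 \<le> 1/x - of_int n" "1/x - of_int n < a"
  shows "Talpha a x = 1/x - of_int n"
proof -
  have "\<lfloor>1 / x + 1 - a\<rfloor> = n" by (rule floor_unique) (use assms in auto)
  thus ?thesis using assms(1) by (simp add: Talpha_def)
qed

lemma int01:
  fixes d :: real
  assumes "d = of_int k" "-1 < d" "d < 2"
  shows "d \<in> {0,1}"
proof -
  have "k \<ge> 0" "k \<le> 1" using assms by auto
  hence "k = 0 \<or> k = 1" by auto
  thus ?thesis using assms(1) by auto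
qed

theorem lemma4p2:
  fixes a b x z :: real
  defines "g \<equiv> (sqrt 5 - 1) / 2"
  assumes hab: "g \<le> a" "a \<le> b" "b \<le> 1"
    and hx: "a - 1 \<le> x" "x < a"
    and hz: "b - 1 \<le> z" "z < b"
  shows
    "((x = z \<or> (x + 1) * (1 - z) = 1 \<or> (1 - x) * (z + 1) = 1)
       \<longrightarrow> Talpha b z - Talpha a x \<in> {0, 1})
    \<and> ((x + z = 0 \<or> (x + 1) * (z + 1) = 1)
       \<longrightarrow> Talpha a x + Talpha b z \<in> {0, 1})
    \<and> (z - x = 1 \<longrightarrow> (x + 1) * (Talpha b z + 1) = 1)
    \<and> (x + z = 1 \<longrightarrow> x > 1 / (a + 1)
       \<longrightarrow> (Talpha a x + 1) * (1 - z) = 1)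
    \<and> (x + z = 1 \<longrightarrow> z > 1 / (b + 1)
       \<longrightarrow> (1 - x) * (Talpha b z + 1) = 1)
    \<and> (x + z = 1 \<longrightarrow> x \<le> 1 / (a + 1) \<longrightarrow> z \<le> 1 / (b + 1)
       \<longrightarrow> (Talpha a x + 1) * (Talpha b z + 1) = 1)"
proof -
  have s5: "sqrt 5 > 2" by (simp add: real_less_rsqrt)
  have s5sq: "sqrt 5 * sqrt 5 = 5" by simp
  have gpos: "g > 1/2" using s5 g_def by simp
  have gg: "g * g + g = 1" unfolding g_def by (simp add: field_simps s5sq) 
  have s53: "sqrt 5 < 3" by (simp add: real_sqrt_less_iff real_less_lsqrt)
  have g1: "g < 1" using s53 g_def by simp
  have aa: "a * a + a \<ge> 1"
  proof -
    have "g * g \<le> a * a" using hab gpos by (intro mult_mono) auto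
    thus ?thesis using gg hab by linarith
  qed
  have P1: "(x = z \<or> (x + 1) * (1 - z) = 1 \<or> (1 - x) * (z + 1) = 1)
       \<longrightarrow> Talpha b z - Talpha a x \<in> {0, 1}"
  proof
    assume H: "x = z \<or> (x + 1) * (1 - z) = 1 \<or> (1 - x) * (z + 1) = 1"
    have z1: "1 - z > 0" "1 - x > 0" using hab hx hz by auto
    show "Talpha b z - Talpha a x \<in> {0, 1}"
    proof (cases "x = 0")
      case True
      hence "z = 0" using H by auto
      thus ?thesis using True by (simp add: Talpha_def)
    next
      case False
      have zn: "z \<noteq> 0" using H False by auto
      have "\<exists>m::int. 1/z - 1/x = of_int m"
      proof -
        { assume "x = z" hence ?thesis by (intro exI[of _ 0]) simp }
        moreover
        { assume h: "(x + 1) * (1 - z) = 1"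
          have "1/z - 1/x = 1" using h False zn z1 by (simp add: field_simps)
          hence ?thesis by (intro exI[of _ 1]) simp }
        moreover
        { assume h: "(1 - x) * (z + 1) = 1"
          have "1/z - 1/x = -1" using h False zn z1 by (simp add: field_simps)
          hence ?thesis by (intro exI[of _ "-1"]) simp }
        ultimately show ?thesis using H by blast
      qed
      then obtain m :: int where m: "1/z - 1/x = of_int m" by blast
      obtain n :: int where n: "Talpha a x = 1/x - of_int n" "a - 1 \<le> Talpha a x" "Talpha a x < a"
        using T_props[OF False] by blast
      obtain k :: int where k: "Talpha b z = 1/z - of_int k" "b - 1 \<le> Talpha b z" "Talpha b z < b"
        using T_props[OF zn] by blast
      have "Talpha b z - Talpha a x = of_int (m - k + n)" using m n k by simp
      thus ?thesis by (rule int01) (use n k hab g1 gpos in auto)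
    qed
  qed
  have P2: "(x + z = 0 \<or> (x + 1) * (z + 1) = 1)
       \<longrightarrow> Talpha a x + Talpha b z \<in> {0, 1}"
  proof
    assume H: "x + z = 0 \<or> (x + 1) * (z + 1) = 1"
    have z1: "1 + z > 0" "1 + x > 0" using hab hx hz gpos by auto
    show "Talpha a x + Talpha b z \<in> {0, 1}"
    proof (cases "x = 0")
      case True
      hence "z = 0" using H by auto
      thus ?thesis using True by (simp add: Talpha_def)
    next
      case False
      have zn: "z \<noteq> 0" using H False z1 by (auto simp: algebra_simps)
      have "\<exists>m::int. 1/z + 1/x = of_int m"
      proof -
        { assume h: "x + z = 0"
          have "1/z + 1/x = 0" using h False zn by (simp add: field_simps)
          hence ?thesis by (intro exI[of _ 0]) simp }
        moreover
        { assume h: "(x + 1) * (z + 1) = 1"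
          have "1/z + 1/x = -1" using h False zn z1 by (simp add: field_simps)
          hence ?thesis by (intro exI[of _ "-1"]) simp }
        ultimately show ?thesis using H by blast
      qed
      then obtain m :: int where m: "1/z + 1/x = of_int m" by blast
      obtain n :: int where n: "Talpha a x = 1/x - of_int n" "a - 1 \<le> Talpha a x" "Talpha a x < a"
        using T_props[OF False] by blast
      obtain k :: int where k: "Talpha b z = 1/z - of_int k" "b - 1 \<le> Talpha b z" "Talpha b z < b"
        using T_props[OF zn] by blast
      have "Talpha a x + Talpha b z = of_int (m - k - n)" using m n k by simp
      thus ?thesis by (rule int01) (use n k hab g1 gpos in auto)
    qed
  qed
  have P3: "z - x = 1 \<longrightarrow> (x + 1) * (Talpha b z + 1) = 1"
  proof
    assume H: "z - x = 1"
    have za: "z \<ge> a" using H hx by simp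
    have zp: "z > 0" using za hab gpos by simp
    have ab: "a < b" using za hz by simp
    have "a * a < a * b" using ab hab gpos by simp
    hence "1 < a * (1 + b)" using aa by (simp add: algebra_simps)
    also have "\<dots> \<le> z * (1 + b)" using za hab gpos by (intro mult_right_mono) auto
    finally have c1: "1 < z * (1 + b)" .
    have c2: "1 < 1 / z" using zp hz hab by simp
    have "1/z - 1 < b" using c1 zp by (simp add: field_simps)
    hence T: "Talpha b z = 1/z - of_int 1" using c2 hab zp by (intro T_eq) (use c2 hab zp in linarith)+
    show "(x + 1) * (Talpha b z + 1) = 1" using T H zp by (simp add: field_simps)
  qed
  have P4: "x + z = 1 \<longrightarrow> x > 1 / (a + 1) \<longrightarrow> (Talpha a x + 1) * (1 - z) = 1"
  proof (intro impI)
    assume H: "x + z = 1" and h: "x > 1 / (a + 1)"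
    have xp: "x > 0" using H hz hab by simp
    have c1: "1 < x * (a + 1)" using h hab gpos by (simp add: field_simps)
    have c2: "1 < 1 / x" using xp hx hab by simp
    have "1/x - 1 < a" using c1 xp by (simp add: field_simps)
    hence T: "Talpha a x = 1/x - of_int 1" using c2 hab xp by (intro T_eq) (use c2 hab xp in linarith)+
    have "1 - z = x" using H by simp
    thus "(Talpha a x + 1) * (1 - z) = 1" using T xp by simp
  qed
  have P5: "x + z = 1 \<longrightarrow> z > 1 / (b + 1) \<longrightarrow> (1 - x) * (Talpha b z + 1) = 1"
  proof (intro impI)
    assume H: "x + z = 1" and h: "z > 1 / (b + 1)"
    have zp: "z > 0" using H hx hab by simp
    have c1: "1 < z * (b + 1)" using h hab gpos by (simp add: field_simps)
    have c2: "1 < 1 / z" using zp hz hab by simp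
    have "1/z - 1 < b" using c1 zp by (simp add: field_simps)
    hence T: "Talpha b z = 1/z - of_int 1" using c2 hab zp by (intro T_eq) (use c2 hab zp in linarith)+
    have "1 - x = z" using H by simp
    thus "(1 - x) * (Talpha b z + 1) = 1" using T zp by simp
  qed
  have P6: "x + z = 1 \<longrightarrow> x \<le> 1 / (a + 1) \<longrightarrow> z \<le> 1 / (b + 1)
       \<longrightarrow> (Talpha a x + 1) * (Talpha b z + 1) = 1"
  proof (intro impI)
    assume H: "x + z = 1" and hxa: "x \<le> 1 / (a + 1)" and hzb: "z \<le> 1 / (b + 1)"
    have xp: "x > 0" using H hz hab by simp
    have zp: "z > 0" using H hx hab by simp
    have d1: "x * (a + 1) \<le> 1" using hxa hab gpos by (simp add: field_simps)
    have d2: "z * (b + 1) \<le> 1" using hzb hab gpos by (simp add: field_simps)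
    have e1: "1 < x * (a + 2)"
    proof (cases "a * b + b > 1")
      case True
      have "x = 1 - z" using H by simp
      have "x * (b + 1) + z * (b + 1) = (x + z) * (b + 1)" by (simp add: algebra_simps)
      hence "x * (b + 1) = b + 1 - z * (b + 1)" using H by simp
      hence "x * (b + 1) \<ge> b" using d2 by linarith
      hence "x * (b+1) * (a + 2) \<ge> b * (a + 2)" using hab gpos by (intro mult_right_mono) auto
      moreover have "b * (a + 2) > b + 1" using True by (simp add: algebra_simps)
      ultimately have "(x * (a + 2)) * (b + 1) > 1 * (b + 1)" by (simp add: algebra_simps)
      moreover have "b + 1 > 0" "a + 1 > 0" using hab gpos by auto
      ultimately show ?thesis using mult_less_cancel_right_pos by metis
    next
      case False
      have "x > 1 - b" using H hz by simp
      hence L: "x * (a + 2) > (1 - b) * (a + 2)" using hab gpos by (intro mult_strict_right_mono) auto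
      have M: "a * a \<le> a * b" using hab gpos by (intro mult_left_mono) auto
      have "(1 - b) * (a + 2) = a + 2 - a * b - 2 * b" by (simp add: algebra_simps)
      hence "(1 - b) * (a + 2) \<ge> 1" using False hab aa M by linarith
      thus ?thesis using L by simp
    qed
    have e2: "1 < z * (b + 2)"
    proof (cases "a * b + a > 1")
      case True
      have "z = 1 - x" using H by simp
      have "x * (a + 1) + z * (a + 1) = (x + z) * (a + 1)" by (simp add: algebra_simps)
      hence "z * (a + 1) = a + 1 - x * (a + 1)" using H by simp
      hence "z * (a + 1) \<ge> a" using d1 by linarith
      hence "z * (a+1) * (b + 2) \<ge> a * (b + 2)" using hab gpos by (intro mult_right_mono) auto
      moreover have "a * (b + 2) > a + 1" using True by (simp add: algebra_simps)
      ultimately have "(z * (b + 2)) * (a + 1) > 1 * (a + 1)" by (simp add: algebra_simps)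
      moreover have "b + 1 > 0" "a + 1 > 0" using hab gpos by auto
      ultimately show ?thesis using mult_less_cancel_right_pos by metis
    next
      case False
      have "z > 1 - a" using H hx by simp
      hence L: "z * (b + 2) > (1 - a) * (b + 2)" using hab gpos by (intro mult_strict_right_mono) auto
      moreover have "(1 - a) * (b + 2) = b + 2 - a * b - 2 * a" by (simp add: algebra_simps)
      hence "(1 - a) * (b + 2) \<ge> 1" using False hab by linarith
      thus ?thesis using L by simp
    qed
    have "a + 1 \<le> 1/x" "1/x < a + 2" using d1 e1 xp by (simp_all add: field_simps)
    hence Tx: "Talpha a x = 1/x - of_int 2" using xp by (intro T_eq) auto
    have "b + 1 \<le> 1/z" "1/z < b + 2" using d2 e2 zp by (simp_all add: field_simps)
    hence Tz: "Talpha b z = 1/z - of_int 2" using zp by (intro T_eq) auto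
    have zz: "z = 1 - x" using H by simp
    have "Talpha a x + 1 = (1 - x) / x" using Tx xp by (simp add: field_simps)
    hence A: "Talpha a x + 1 = z / x" using zz by simp
    have "Talpha b z + 1 = (1 - z) / z" using Tz zp by (simp add: field_simps)
    hence B: "Talpha b z + 1 = x / z" using H by (simp add: algebra_simps)
    show "(Talpha a x + 1) * (Talpha b z + 1) = 1" unfolding A B using xp zp by simp
  qed
  show ?thesis using P1 P2 P3 P4 P5 P6 by blast
qed

end
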